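(* Suppose Assumptions 1, 2 and 3 hold and problem (P) is feasible. Let $\lambda^*$ be a maximizer over $\mathbb{R}$ of the modified dual function $g^m$, so that $(\hat{x}_1(\lambda^* ),\dots,\hat{x}_N(\lambda^* ))$ is an optimal solution of (P). Consider the distributed dynamics $$\dot{\lambda}_i=d_i-\hat{x}_i(\lambda_i)+\phi_i\big(\hat{x}_i(\lambda_i)\big)+k\sum_{j\in\mathcal{N}_i}(\lambda_j-\lambda_i),\qquad i=1,\dots,N,$$ with gain $k>0$. Then for every $\epsilon>0$ there exist $\bar{k}>0$ and a function $T(\boldsymbol{\lambda}(0),k)$ such that for all $k>\bar{k}$ and every initial condition $\boldsymbol{\lambda}(0)=(\lambda_1(0),\dots,\lambda_N(0))\in\mathbb{R}^N$, $$|\hat{x}_i(\lambda_i(t))-\hat{x}_i(\lambda^* )|\le\epsilon\quad\text{for all } i\in\{1,\dots,N\}\text{ and all } t\ge T(\boldsymbol{\lambda}(0),k).$$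
   Context: For $i=1,\dots,N$: $d_i\in\mathbb{R}$, $\mathcal{X}_i=[\underline{x}_i,\bar{x}_i]$ a nonempty closed interval, $f_i,\phi_i:\mathbb{R}\to\mathbb{R}$. Problem (P): minimize $\sum_{i=1}^N f_i(x_i)$ subject to $\sum_{i=1}^N d_i=\sum_{i=1}^N(x_i-\phi_i(x_i))$ and $x_i\in\mathcal{X}_i$ for all $i$; feasibility is equivalent to $\sum_i(\underline{x}_i-\phi_i(\underline{x}_i))\le\sum_i d_i\le\sum_i(\bar{x}_i-\phi_i(\bar{x}_i))$. Assumption 1: for each $i$, $f_i$ and $\phi_i$ are continuously differentiable, $f_i$ is strictly convex on $\mathcal{X}_i$, $\phi_i$ is convex on $\mathcal{X}_i$, and $\phi_i'(x_i)<1$ for all $x_i\in\mathcal{X}_i$. Assumption 2: $f_i'(x_i)>0$ for all $x_i\in\mathcal{X}_i$ and all $i$. Assumption 3: the communication graph $\mathcal{G}=(\{1,\dots,N\},\mathcal{E})$ is undirected and connected; $\mathcal{N}_i=\{j:(j,i)\in\mathcal{E}\}$. Local Lagrangian: $\mathcal{L}^r_i(x_i,\lambda)=f_i(x_i)+\lambda(d_i-x_i+\phi_i(x_i))$. Let $v_i(x_i)=f_i'(x_i)(1-\phi_i'(x_i))^{-1}$ on $\mathcal{X}_i$ (strictly increasing). Define for $\lambda\in\mathbb{R}$: $\hat{x}_i(\lambda)=\underline{x}_i$ if $\lambda\le v_i(\underline{x}_i)$; $\hat{x}_i(\lambda)=v_i^{-1}(\lambda)$ if $v_i(\underline{x}_i)<\lambda<v_i(\bar{x}_i)$;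 $\hat{x}_i(\lambda)=\bar{x}_i$ if $\lambda\ge v_i(\bar{x}_i)$. Modified dual function: $g^m(\lambda)=\sum_{i=1}^N\mathcal{L}^r_i(\hat{x}_i(\lambda),\lambda)$. *)

theory Defs
  imports "HOL-Analysis.Analysis"
begin

definition strictly_convex_on :: "real set \<Rightarrow> (real \<Rightarrow> real) \<Rightarrow> bool" where
  "strictly_convex_on S g \<longleftrightarrow>
     (\<forall>x\<in>S. \<forall>y\<in>S. x \<noteq> y \<longrightarrow> (\<forall>u::real. 0 < u \<and> u < 1 \<longrightarrow>
        g (u * x + (1 - u) * y) < u * g x + (1 - u) * g y))"

definition vfun :: "(real \<Rightarrow> real) \<Rightarrow> (real \<Rightarrow> real) \<Rightarrow> real \<Rightarrow> real" where
  "vfun f phi x = deriv f x / (1 - deriv phi x)"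

definition xhat :: "(real \<Rightarrow> real) \<Rightarrow> (real \<Rightarrow> real) \<Rightarrow> real \<Rightarrow> real \<Rightarrow> real \<Rightarrow> real" where
  "xhat f phi xl xu lam =
     (if lam \<le> vfun f phi xl then xl
      else if lam \<ge> vfun f phi xu then xu
      else (THE x. x \<in> {xl..xu} \<and> vfun f phi x = lam))"

definition lagr_loc :: "(real \<Rightarrow> real) \<Rightarrow> (real \<Rightarrow> real) \<Rightarrow> real \<Rightarrow> real \<Rightarrow> real \<Rightarrow> real" where
  "lagr_loc f phi d x lam = f x + lam * (d - x + phi x)"

definition gm :: "nat \<Rightarrow> (nat \<Rightarrow> real \<Rightarrow> real) \<Rightarrow> (nat \<Rightarrow> real \<Rightarrow> real) \<Rightarrow> (nat \<Rightarrow> real)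
     \<Rightarrow> (nat \<Rightarrow> real) \<Rightarrow> (nat \<Rightarrow> real) \<Rightarrow> real \<Rightarrow> real" where
  "gm N f phi d xl xu lam =
     (\<Sum>i<N. lagr_loc (f i) (phi i) (d i) (xhat (f i) (phi i) (xl i) (xu i) lam) lam)"

end

theory Submission
  imports Defs
begin

lemma tangent_Icc:
  fixes f :: "real \<Rightarrow> real"
  assumes conv: "convex_on {a..b} f" and c: "c \<in> {a..b}" and x: "x \<in> {a..b}"
    and der: "(f has_real_derivative f') (at c)"
  shows "f x - f c \<ge> f' * (x - c)"
proof (cases x c rule: linorder_cases)
  assume xc: "x > c"
  have cv: "convex_on {c..x} f" using c x by (intro convex_on_subset[OF conv]) auto
  have "at c within {c<..<x} \<noteq> bot" using xc by (simp add: at_within_eq_bot_iff)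
  moreover from der have "((\<lambda>y. (f y - f c) / (y - c)) \<longlongrightarrow> f') (at c within {c<..<x})"
    unfolding has_field_derivative_iff by (blast intro: tendsto_mono at_le)
  moreover have "eventually (\<lambda>y. (f y - f c) / (y - c) \<le> (f x - f c) / (x - c)) (at c within {c<..<x})"
    unfolding eventually_at_filter
  proof (intro always_eventually allI impI)
    fix y assume y: "y \<in> {c<..<x}"
    with cv have "f y \<le> (f x - f c) / (x - c) * (y - c) + f c"
      by (intro convex_onD_Icc') auto
    hence "f y - f c \<le> (f x - f c) / (x - c) * (y - c)" by simp
    thus "(f y - f c) / (y - c) \<le> (f x - f c) / (x - c)" using y xc by (simp add: field_split_simps)
  qed
  ultimately have "f' \<le> (f x - f c) / (x - c)" by (simp add: tendsto_upperbound)
  thus ?thesis using xc by (simp add: field_simps)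
next
  assume xc: "x < c"
  have cv: "convex_on {x..c} f" using c x by (intro convex_on_subset[OF conv]) auto
  have "at c within {x<..<c} \<noteq> bot" using xc by (simp add: at_within_eq_bot_iff)
  moreover from der have "((\<lambda>y. (f y - f c) / (y - c)) \<longlongrightarrow> f') (at c within {x<..<c})"
    unfolding has_field_derivative_iff by (blast intro: tendsto_mono at_le)
  moreover have "eventually (\<lambda>y. (f y - f c) / (y - c) \<ge> (f x - f c) / (x - c)) (at c within {x<..<c})"
    unfolding eventually_at_filter
  proof (intro always_eventually allI impI)
    fix y assume y: "y \<in> {x<..<c}"
    with cv have "f y \<le> (f x - f c) / (c - x) * (c - y) + f c"
      by (intro convex_onD_Icc'') auto
    hence "f y - f c \<le> (f x - f c) * ((c - y) / (c - x))" by simp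
    also have "(c - y) / (c - x) = (y - c) / (x - c)" using y xc by (simp add: field_simps)
    finally show "(f y - f c) / (y - c) \<ge> (f x - f c) / (x - c)" using y xc
      by (simp add: field_split_simps)
  qed
  ultimately have "f' \<ge> (f x - f c) / (x - c)" by (simp add: tendsto_lowerbound)
  thus ?thesis using xc by (simp add: field_simps)
qed simp

lemma strictly_convex_imp_convex:
  assumes "strictly_convex_on {a..b} f"
  shows "convex_on {a..b} f"
proof (rule convex_onI)
  fix t :: real and x y assume t: "0 < t" "t < 1" and xy: "x \<in> {a..b}" "y \<in> {a..b}"
  show "f ((1 - t) *\<^sub>R x + t *\<^sub>R y) \<le> (1 - t) * f x + t * f y"
  proof (cases "x = y")
    case True thus ?thesis by (simp add: algebra_simps)
  next
    case False
    have "f (t * y + (1 - t) * x) < t * f y + (1 - t) * f x"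
      using assms[unfolded strictly_convex_on_def] xy t False by auto
    thus ?thesis by (simp add: algebra_simps)
  qed
qed simp

lemma strict_tangent_Icc:
  fixes f :: "real \<Rightarrow> real"
  assumes sc: "strictly_convex_on {a..b} f" and c: "c \<in> {a..b}" and x: "x \<in> {a..b}"
    and xc: "x \<noteq> c"
    and der: "(f has_real_derivative f') (at c)"
  shows "f x - f c > f' * (x - c)"
proof -
  let ?m = "(1/2) * x + (1 - 1/2) * c"
  have m: "?m \<in> {a..b}" using c x by auto
  have "f ?m < (1/2) * f x + (1 - 1/2) * f c"
  proof -
    have "\<forall>u. 0 < u \<and> u < 1 \<longrightarrow> f (u*x+(1-u)*c) < u*f x+(1-u)*f c"
      using sc c x xc unfolding strictly_convex_on_def by blast
    from spec[OF this, of "1/2"] show ?thesis by simp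
  qed
  moreover have "f ?m - f c \<ge> f' * (?m - c)"
    using tangent_Icc[OF strictly_convex_imp_convex[OF sc] c m der] .
  ultimately show ?thesis by (simp add: algebra_simps)
qed



locale agent =
  fixes f p :: "real \<Rightarrow> real" and a b :: real
  assumes ab: "a \<le> b"
    and C1f: "f C1_differentiable_on UNIV" and C1p: "p C1_differentiable_on UNIV"
    and fconv: "strictly_convex_on {a..b} f"
    and pconv: "convex_on {a..b} p"
    and pder: "\<forall>x\<in>{a..b}. deriv p x < 1"
    and fder: "\<forall>x\<in>{a..b}. deriv f x > 0"
begin

lemma fD: "(f has_real_derivative deriv f x) (at x)"
  using C1f unfolding C1_differentiable_on_eq by (simp add: DERIV_deriv_iff_real_differentiable)
lemma pD: "(p has_real_derivative deriv p x) (at x)"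
  using C1p unfolding C1_differentiable_on_eq by (simp add: DERIV_deriv_iff_real_differentiable)

lemma cont_df: "continuous_on S (deriv f)"
proof -
  have "(\<lambda>x. vector_derivative f (at x)) = deriv f" by (rule ext) (simp add: field_derivative_eq_vector_derivative)
  thus ?thesis using C1f unfolding C1_differentiable_on_eq by (metis continuous_on_subset subset_UNIV)
qed
lemma cont_dp: "continuous_on S (deriv p)"
proof -
  have "(\<lambda>x. vector_derivative p (at x)) = deriv p" by (rule ext) (simp add: field_derivative_eq_vector_derivative)
  thus ?thesis using C1p unfolding C1_differentiable_on_eq by (metis continuous_on_subset subset_UNIV)
qed
lemma cont_f: "continuous_on S f"
  by (meson DERIV_isCont continuous_at_imp_continuous_on fD)
lemma cont_p: "continuous_on S p"
  by (meson DERIV_isCont continuous_at_imp_continuous_on pD)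

lemma df_strict: assumes "x \<in> {a..b}" "y \<in> {a..b}" "x < y" shows "deriv f x < deriv f y"
proof -
  have "f y - f x > deriv f x * (y - x)" using strict_tangent_Icc[OF fconv assms(1,2) _ fD] assms(3) by auto
  moreover have "f x - f y > deriv f y * (x - y)" using strict_tangent_Icc[OF fconv assms(2,1) _ fD] assms(3) by auto
  ultimately have "(deriv f y - deriv f x) * (y - x) > 0" by (simp add: algebra_simps)
  thus ?thesis using assms(3) by (simp add: zero_less_mult_iff)
qed

lemma dp_mono: assumes "x \<in> {a..b}" "y \<in> {a..b}" "x \<le> y" shows "deriv p x \<le> deriv p y"
proof (cases "x = y")
  case False
  have "p y - p x \<ge> deriv p x * (y - x)" using tangent_Icc[OF pconv assms(1,2) pD] .
  moreover have "p x - p y \<ge> deriv p y * (x - y)" using tangent_Icc[OF pconv assms(2,1) pD] .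
  ultimately have "(deriv p y - deriv p x) * (y - x) \<ge> 0" by (simp add: algebra_simps)
  thus ?thesis using assms(3) False by (simp add: zero_le_mult_iff)
qed simp

abbreviation v where "v \<equiv> vfun f p"

lemma v_strict: assumes "x \<in> {a..b}" "y \<in> {a..b}" "x < y" shows "v x < v y"
proof -
  have d1: "deriv f x < deriv f y" by (rule df_strict[OF assms])
  have d2: "deriv p x \<le> deriv p y" using dp_mono[OF assms(1,2)] assms(3) by simp
  have p1: "deriv f x > 0" "deriv p y < 1" "deriv p x < 1" using fder pder assms by auto
  have "deriv f x / (1 - deriv p x) \<le> deriv f x / (1 - deriv p y)"
    using p1 d2 by (intro divide_left_mono) auto
  also have "\<dots> < deriv f y / (1 - deriv p y)"
    using p1 d1 by (intro divide_strict_right_mono) auto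
  finally show ?thesis unfolding vfun_def .
qed

lemma v_mono: assumes "x \<in> {a..b}" "y \<in> {a..b}" "x \<le> y" shows "v x \<le> v y"
  using v_strict[OF assms(1,2)] assms(3) by (cases "x = y") auto

lemma v_cont: "continuous_on {a..b} v"
  unfolding vfun_def
  by (intro continuous_on_divide continuous_on_diff continuous_on_const cont_df cont_dp)
     (use pder in force)

abbreviation xh where "xh \<equiv> xhat f p a b"

lemma v_sol: assumes "v a < mu" "mu < v b" shows "\<exists>!x. x \<in> {a..b} \<and> v x = mu"
proof -
  obtain x where x: "a \<le> x" "x \<le> b" "v x = mu"
    using IVT'[of v a mu b] assms ab v_cont by force
  moreover have "y = x" if "y \<in> {a..b}" "v y = mu" for y
    using v_strict[of x y] v_strict[of y x] x that by (cases x y rule: linorder_cases) auto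
  ultimately show ?thesis by auto
qed

lemma xh_int: assumes "v a < mu" "mu < v b" shows "xh mu \<in> {a..b} \<and> v (xh mu) = mu"
proof -
  have "xh mu = (THE x. x \<in> {a..b} \<and> v x = mu)" unfolding xhat_def using assms by auto
  thus ?thesis using theI'[OF v_sol[OF assms]] by simp
qed

lemma vab: "v a \<le> v b" using v_mono[of a b] ab by auto

lemma xh_in: "xh mu \<in> {a..b}"
  using xh_int[of mu] ab unfolding xhat_def by (auto simp: not_le)

lemma xh_P1: assumes "xh mu > a" shows "v (xh mu) \<le> mu"
proof (cases "mu \<le> v a")
  case True then show ?thesis using assms unfolding xhat_def by simp
next
  case F: False
  show ?thesis
  proof (cases "mu \<ge> v b")
    case True then show ?thesis using F unfolding xhat_def by simp
  next
    case False then show ?thesis using F xh_int[of mu] by simp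
  qed
qed

lemma xh_P2: assumes "xh mu < b" shows "v (xh mu) \<ge> mu"
proof (cases "mu \<le> v a")
  case True then show ?thesis using assms unfolding xhat_def by simp
next
  case F: False
  show ?thesis
  proof (cases "mu \<ge> v b")
    case True then show ?thesis using F assms unfolding xhat_def by simp
  next
    case False then show ?thesis using F xh_int[of mu] by simp
  qed
qed

lemma xh_mono: assumes "mu \<le> nu" shows "xh mu \<le> xh nu"
proof (rule ccontr)
  assume "\<not> xh mu \<le> xh nu"
  hence lt: "xh nu < xh mu" by simp
  have "xh nu < b" "xh mu > a" using lt xh_in[of mu] xh_in[of nu] by auto
  hence "v (xh nu) \<ge> nu" "v (xh mu) \<le> mu" using xh_P1 xh_P2 by auto
  moreover have "v (xh nu) < v (xh mu)" using v_strict[OF xh_in xh_in lt] .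
  ultimately show False using assms by simp
qed

lemma xh_v: assumes "x \<in> {a..b}" shows "xh (v x) = x"
proof -
  consider "x = a" | "x = b" "a < b" | "a < x" "x < b" using assms by force
  thus ?thesis
  proof cases
    case 1 thus ?thesis unfolding xhat_def by simp
  next
    case 2
    have "v a < v b" using v_strict[of a b] 2 by auto
    thus ?thesis using 2 unfolding xhat_def by simp
  next
    case 3
    have lt: "v a < v x" "v x < v b" using v_strict[of a x] v_strict[of x b] 3 by auto
    have "xh (v x) \<in> {a..b} \<and> v (xh (v x)) = v x" by (rule xh_int[OF lt])
    thus ?thesis using v_sol[OF lt] assms by blast
  qed
qed

lemma xh_clamp: "xh mu = xh (max (v a) (min (v b) mu))"
proof -
  have "xh (v a) = a" "xh (v b) = b" using xh_v ab by auto
  moreover have "xh mu = a" if "mu \<le> v a" using that unfolding xhat_def by simp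
  moreover have "xh mu = b" if "mu \<ge> v b" "\<not> mu \<le> v a" using that unfolding xhat_def by simp
  moreover have "v a < v b \<or> a = b" using v_strict[of a b] ab by force
  ultimately show ?thesis using vab
    by (cases "mu \<le> v a"; cases "mu \<ge> v b") (auto simp: max_def min_def)
qed

lemma xh_cont: "continuous_on S xh"
proof -
  have "continuous_on (v ` {a..b}) xh"
    by (rule continuous_on_inv[OF v_cont compact_Icc]) (simp add: xh_v)
  moreover have "v ` {a..b} \<supseteq> {v a..v b}"
  proof
    fix y assume "y \<in> {v a..v b}"
    then obtain x where "a \<le> x" "x \<le> b" "v x = y" using IVT'[of v a y b] ab v_cont by auto
    thus "y \<in> v ` {a..b}" by auto
  qed
  ultimately have c1: "continuous_on {v a..v b} xh" by (rule continuous_on_subset)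
  have "continuous_on S (xh \<circ> (\<lambda>mu. max (v a) (min (v b) mu)))"
    by (rule continuous_on_compose[OF _ continuous_on_subset[OF c1]])
       (auto intro!: continuous_intros simp: vab)
  moreover have "xh \<circ> (\<lambda>mu. max (v a) (min (v b) mu)) = xh"
    by (rule ext) (simp add: xh_clamp[symmetric])
  ultimately show ?thesis by simp
qed

end


context agent begin

lemma LD: "((\<lambda>y. f y + mu * (d - y + p y)) has_real_derivative (deriv f y + mu * (- 1 + deriv p y))) (at y)"
  by (auto intro!: derivative_eq_intros fD pD)

lemma LD_eq: assumes "y \<in> {a..b}"
  shows "deriv f y + mu * (- 1 + deriv p y) = (1 - deriv p y) * (v y - mu)"
proof -
  have "1 - deriv p y \<noteq> 0" using pder assms by force
  thus ?thesis unfolding vfun_def by (simp add: field_simps)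
qed

lemma xh_min: assumes x: "x \<in> {a..b}"
  shows "f (xh mu) + mu * (d - xh mu + p (xh mu)) \<le> f x + mu * (d - x + p x)"
proof -
  define L where "L = (\<lambda>y. f y + mu * (d - y + p y))"
  define z where "z = xh mu"
  have z: "z \<in> {a..b}" unfolding z_def by (rule xh_in)
  consider "x = z" | "z < x" | "x < z" by force
  hence "L z \<le> L x"
  proof cases
    case 2
    then obtain y where y: "z < y" "y < x" "L x - L z = (x - z) * (deriv f y + mu * (- 1 + deriv p y))"
      using MVT2[of z x L "\<lambda>y. deriv f y + mu * (- 1 + deriv p y)"] LD[of mu d] unfolding L_def by blast
    have yab: "y \<in> {a..b}" using y z x by auto
    have "z < b" using 2 x by auto
    hence "v z \<ge> mu" unfolding z_def by (rule xh_P2)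
    moreover have "v z < v y" using v_strict[OF z yab y(1)] .
    moreover have "1 - deriv p y > 0" using pder yab by force
    ultimately have "deriv f y + mu * (- 1 + deriv p y) \<ge> 0" using LD_eq[OF yab] by simp
    hence "(x - z) * (deriv f y + mu * (- 1 + deriv p y)) \<ge> 0" using 2 by simp
    thus ?thesis using y by simp
  next
    case 3
    then obtain y where y: "x < y" "y < z" "L z - L x = (z - x) * (deriv f y + mu * (- 1 + deriv p y))"
      using MVT2[of x z L "\<lambda>y. deriv f y + mu * (- 1 + deriv p y)"] LD[of mu d] unfolding L_def by blast
    have yab: "y \<in> {a..b}" using y z x by auto
    have "z > a" using 3 x by auto
    hence "v z \<le> mu" unfolding z_def by (rule xh_P1)
    moreover have "v y < v z" using v_strict[OF yab z y(2)] .
    moreover have "1 - deriv p y > 0" using pder yab by force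
    ultimately have "deriv f y + mu * (- 1 + deriv p y) \<le> 0" using LD_eq[OF yab]
      by (simp add: mult_nonneg_nonpos)
    hence "(z - x) * (deriv f y + mu * (- 1 + deriv p y)) \<le> 0" using 3 by (simp add: mult_nonneg_nonpos)
    thus ?thesis using y by simp
  qed simp
  thus ?thesis unfolding L_def z_def .
qed

lemma psi: "\<exists>c>0. \<forall>x y. a \<le> x \<longrightarrow> x \<le> y \<longrightarrow> y \<le> b \<longrightarrow> (y - p y) - (x - p x) \<ge> c * (y - x)"
proof -
  have cc: "continuous_on {a..b} (\<lambda>y. 1 - deriv p y)"
    by (intro continuous_intros cont_dp)
  obtain m where m: "m \<in> {a..b}" "\<forall>y\<in>{a..b}. 1 - deriv p m \<le> 1 - deriv p y"
    using continuous_attains_inf[OF compact_Icc _ cc] ab by fastforce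
  define c where "c = 1 - deriv p m"
  have c: "c > 0" using pder m unfolding c_def by force
  have "(y - p y) - (x - p x) \<ge> c * (y - x)" if "a \<le> x" "x \<le> y" "y \<le> b" for x y
  proof (cases "x = y")
    case False
    hence xy: "x < y" using that by simp
    have "\<And>t. ((\<lambda>t. t - p t) has_real_derivative (1 - deriv p t)) (at t)"
      by (auto intro!: derivative_eq_intros pD)
    then obtain t where t: "x < t" "t < y" "(y - p y) - (x - p x) = (y - x) * (1 - deriv p t)"
      using MVT2[of x y "\<lambda>t. t - p t" "\<lambda>t. 1 - deriv p t"] xy by blast
    have "c \<le> 1 - deriv p t" using m(2) t that unfolding c_def by auto
    thus ?thesis using t xy by (simp add: mult.commute mult_right_mono)
  qed simp
  thus ?thesis using c by blast
qed

lemma p_bound: "\<exists>M. \<forall>x\<in>{a..b}. \<bar>p x\<bar> \<le> M"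
proof -
  have "compact (p ` {a..b})" by (rule compact_continuous_image[OF cont_p compact_Icc])
  hence "bounded (p ` {a..b})" by (rule compact_imp_bounded)
  thus ?thesis unfolding bounded_real by auto
qed

end


lemma barrier:
  fixes g g' :: "real \<Rightarrow> real"
  assumes der: "\<forall>t\<ge>s0. (g has_real_derivative g' t) (at t within {s0..})"
    and dec: "\<forall>t\<ge>s0. g t > c \<longrightarrow> g' t \<le> - gam" and gam: "gam \<ge> 0"
    and t1: "t1 \<ge> s0"
  shows "g t1 \<le> max c (g s0 - gam * (t1 - s0))"
proof (rule ccontr)
  assume "\<not> ?thesis"
  hence A: "g t1 > c" "g t1 > g s0 - gam * (t1 - s0)" by auto
  have cont: "continuous_on {s0..} g"
    by (rule DERIV_continuous_on) (use der in auto)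
  have dat: "(g has_real_derivative g' y) (at y)" if "y > s0" for y
  proof -
    have "interior {s0..} = {s0<..}" by (rule interior_Ici[of "s0 - 1"]) simp
    hence "at y within {s0..} = at y" using that by (intro at_within_interior) auto
    moreover have "(g has_real_derivative g' y) (at y within {s0..})" using der that by auto
    ultimately show ?thesis by simp
  qed
  define S where "S = {s \<in> {s0..t1}. g s \<le> c}"
  obtain s where s: "s0 \<le> s" "s \<le> t1" "s = s0 \<or> g s \<le> c" "\<forall>y. s < y \<and> y \<le> t1 \<longrightarrow> g y > c"
  proof (cases "S = {}")
    case True
    thus ?thesis using that[of s0] t1 unfolding S_def by fastforce
  next
    case False
    have cl: "closed S"
    proof -
      have "closed {x \<in> {s0..t1}. g x \<le> (\<lambda>_. c) x}"
        by (rule continuous_on_closed_Collect_le) (auto intro: continuous_on_subset[OF cont] continuous_on_const)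
      thus ?thesis unfolding S_def by simp
    qed
    have bd: "bdd_above S" unfolding S_def by (rule bdd_aboveI[of _ t1]) auto
    have SS: "Sup S \<in> S" by (rule closed_contains_Sup[OF False bd cl])
    have "\<forall>y. Sup S < y \<and> y \<le> t1 \<longrightarrow> g y > c"
    proof (intro allI impI)
      fix y assume y: "Sup S < y \<and> y \<le> t1"
      show "g y > c"
      proof (rule ccontr)
        assume "\<not> g y > c"
        hence "y \<in> S" using y SS unfolding S_def by auto
        hence "y \<le> Sup S" by (rule cSup_upper[OF _ bd])
        thus False using y by simp
      qed
    qed
    thus ?thesis using that[of "Sup S"] SS unfolding S_def by auto
  qed
  have st: "s < t1"
  proof (rule ccontr)
    assume "\<not> s < t1" hence "s = t1" using s by simp
    thus False using s(3) A by auto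
  qed
  obtain l z where z: "s < z" "z < t1" "DERIV g z :> l" "g t1 - g s = (t1 - s) * l"
  proof -
    have "{s..t1} \<subseteq> {s0..}" using s by auto
    moreover have "g differentiable at x" if "s < x" "x < t1" for x
      using dat[of x] that s(1) real_differentiable_def by force
    ultimately show ?thesis using MVT[OF st continuous_on_subset[OF cont]] that by blast
  qed
  have "l = g' z" using DERIV_unique[OF z(3) dat] z s by simp
  moreover have "g z > c" using s(4) z by simp
  ultimately have "l \<le> - gam" using dec z s by simp
  hence "(t1 - s) * l \<le> (t1 - s) * (- gam)" using st by (intro mult_left_mono) auto
  hence B: "g t1 \<le> g s - gam * (t1 - s)" using z(4) by (simp add: algebra_simps)
  have "gam * (t1 - s) \<ge> 0" using gam st by simp
  thus False using s(3) A B by auto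
qed



definition adj :: "(nat \<times> nat) set \<Rightarrow> nat \<Rightarrow> nat \<Rightarrow> real" where
  "adj E j i = (if (j, i) \<in> E then 1 else 0)"

definition Sg :: "nat \<Rightarrow> (nat \<times> nat) set \<Rightarrow> (nat \<Rightarrow> real) \<Rightarrow> real" where
  "Sg N E l = (\<Sum>i<N. \<Sum>j<N. adj E j i * (l j - l i)^2)"

definition Dg :: "nat \<Rightarrow> (nat \<Rightarrow> real) \<Rightarrow> real" where
  "Dg N l = (\<Sum>i<N. \<Sum>j<N. (l i - l j)^2)"

definition ug :: "nat \<Rightarrow> (nat \<times> nat) set \<Rightarrow> (nat \<Rightarrow> real) \<Rightarrow> nat \<Rightarrow> real" where
  "ug N E l i = (\<Sum>j<N. adj E j i * (l j - l i))"

lemma adj_sym: "sym E \<Longrightarrow> adj E i j = adj E j i"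
  unfolding adj_def by (auto dest: symD)

lemma sum_nbr:
  assumes "E \<subseteq> {..<N} \<times> {..<N}"
  shows "(\<Sum>j\<in>{j. (j, i) \<in> E}. F j) = (\<Sum>j<N. adj E j i * F j)"
proof -
  have "{j. (j, i) \<in> E} = {j \<in> {..<N}. (j, i) \<in> E}" using assms by auto
  moreover have "sum F {j\<in>{..<N}. (j, i) \<in> E} = (\<Sum>j<N. if (j, i) \<in> E then F j else 0)"
    by (rule sum.inter_filter) simp
  ultimately have "(\<Sum>j\<in>{j. (j, i) \<in> E}. F j) = (\<Sum>j<N. if (j, i) \<in> E then F j else 0)"
    by simp
  moreover have "(\<Sum>j<N. if (j, i) \<in> E then F j else 0) = (\<Sum>j<N. adj E j i * F j)"
    unfolding adj_def by (intro sum.cong refl) simp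
  ultimately show ?thesis by simp
qed

lemma sw:
  assumes "sym E"
  shows "(\<Sum>i<N. \<Sum>j<N. adj E j i * F i j) = (\<Sum>i<N. \<Sum>j<N. adj E j i * F j i)"
  by (subst sum.swap) (simp add: adj_sym[OF assms])

lemma I1: assumes "sym E" shows "(\<Sum>i<N. ug N E l i) = 0"
proof -
  let ?X = "\<Sum>i<N. \<Sum>j<N. adj E j i * (l j - l i)"
  have "?X = (\<Sum>i<N. \<Sum>j<N. adj E j i * (l i - l j))" by (rule sw[OF assms])
  also have "\<dots> = - ?X" by (simp add: sum_negf[symmetric] algebra_simps)
  finally show ?thesis unfolding ug_def by simp
qed

lemma I2: assumes "sym E" shows "(\<Sum>i<N. l i * ug N E l i) = - (1/2) * Sg N E l"
proof -
  let ?X = "\<Sum>i<N. \<Sum>j<N. adj E j i * (l i * (l j - l i))"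
  have X: "(\<Sum>i<N. l i * ug N E l i) = ?X"
    unfolding ug_def by (simp add: sum_distrib_left algebra_simps)
  have "?X = (\<Sum>i<N. \<Sum>j<N. adj E j i * (l j * (l i - l j)))" by (rule sw[OF assms])
  hence "?X + ?X = ?X + (\<Sum>i<N. \<Sum>j<N. adj E j i * (l j * (l i - l j)))" by simp
  also have "\<dots> = (\<Sum>i<N. \<Sum>j<N. adj E j i * (l i * (l j - l i)) + adj E j i * (l j * (l i - l j)))"
    by (simp add: sum.distrib)
  also have "\<dots> = (\<Sum>i<N. \<Sum>j<N. - (adj E j i * (l j - l i)^2))"
    by (intro sum.cong refl) (simp add: algebra_simps power2_eq_square)
  also have "\<dots> = - Sg N E l" unfolding Sg_def by (simp add: sum_negf)
  finally show ?thesis using X by simp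
qed

lemma I3: "(\<Sum>i<N. \<Sum>j<N. (l i - l j) * (w i - w j))
    = 2 * real N * (\<Sum>i<N. l i * w i) - 2 * (\<Sum>i<N. l i) * (\<Sum>i<N. w i)"
proof -
  have "(\<Sum>i<N. \<Sum>j<N. (l i - l j) * (w i - w j))
      = (\<Sum>i<N. \<Sum>j<N. l i * w i + l j * w j - l i * w j - l j * w i)"
    by (intro sum.cong refl) (simp add: algebra_simps)
  also have "\<dots> = (\<Sum>i<N. real N * (l i * w i) + (\<Sum>j<N. l j * w j) - l i * (\<Sum>j<N. w j) - w i * (\<Sum>j<N. l j))"
    by (simp add: sum.distrib sum_subtractf sum_distrib_left mult.commute)
  also have "\<dots> = real N * (\<Sum>i<N. l i * w i) + real N * (\<Sum>i<N. l i * w i)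
      - (\<Sum>i<N. l i) * (\<Sum>i<N. w i) - (\<Sum>i<N. w i) * (\<Sum>i<N. l i)"
    by (simp add: sum.distrib sum_subtractf sum_distrib_right[symmetric] sum_distrib_left[symmetric])
  also have "\<dots> = 2 * real N * (\<Sum>i<N. l i * w i) - 2 * (\<Sum>i<N. l i) * (\<Sum>i<N. w i)"
    by (simp add: algebra_simps)
  finally show ?thesis .
qed

lemma Sg_nonneg: "Sg N E l \<ge> 0"
  unfolding Sg_def adj_def by (intro sum_nonneg) auto

lemma edge_le:
  assumes "(j, i) \<in> E" "j < N" "i < N"
  shows "(l j - l i)^2 \<le> Sg N E l"
proof -
  have "(l j - l i)^2 = adj E j i * (l j - l i)^2" using assms unfolding adj_def by simp
  also have "\<dots> \<le> (\<Sum>j'<N. adj E j' i * (l j' - l i)^2)"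
    by (rule member_le_sum) (use assms in \<open>auto simp: adj_def\<close>)
  also have "\<dots> \<le> Sg N E l" unfolding Sg_def
    by (rule member_le_sum[where f = "\<lambda>i. \<Sum>j'<N. adj E j' i * (l j' - l i)^2"])
       (use assms in \<open>auto simp: adj_def intro!: sum_nonneg\<close>)
  finally show ?thesis .
qed

lemma path_le:
  assumes nodes: "E \<subseteq> {..<N} \<times> {..<N}" and "(i, j) \<in> E\<^sup>*"
  shows "\<exists>C\<ge>0. \<forall>l. (l i - l j)^2 \<le> C * Sg N E l"
  using assms(2)
proof (induction rule: rtrancl_induct)
  case base thus ?case by (intro exI[of _ 0]) simp
next
  case (step y z)
  then obtain C where C: "C \<ge> 0" "\<forall>l. (l i - l y)^2 \<le> C * Sg N E l" by auto
  have yz: "y < N" "z < N" using step nodes by auto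
  have "(l i - l z)^2 \<le> (2 * C + 2) * Sg N E l" for l
  proof -
    have "(l i - l z)^2 \<le> 2 * (l i - l y)^2 + 2 * (l y - l z)^2"
    proof -
      have h: "0 \<le> ((l i - l y) - (l y - l z))^2" by simp
      thus ?thesis unfolding power2_eq_square by (simp add: algebra_simps)
    qed
    also have "\<dots> \<le> 2 * (C * Sg N E l) + 2 * Sg N E l"
      using C edge_le[OF step(2) yz] by (intro add_mono) auto
    finally show ?thesis by (simp add: algebra_simps)
  qed
  thus ?case using C by (intro exI[of _ "2*C+2"]) auto
qed

lemma coercive:
  assumes nodes: "E \<subseteq> {..<N} \<times> {..<N}" and conn: "\<forall>i<N. \<forall>j<N. (i, j) \<in> E\<^sup>*"
  shows "\<exists>C>0. \<forall>l. Dg N l \<le> C * Sg N E l"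
proof -
  have "\<forall>ij\<in>{..<N}\<times>{..<N}. \<exists>C. C \<ge> 0 \<and> (\<forall>l. (l (fst ij) - l (snd ij))^2 \<le> C * Sg N E l)"
    using path_le[OF nodes] conn by auto
  then obtain Cf where Cf: "\<forall>ij\<in>{..<N}\<times>{..<N}. Cf ij \<ge> 0 \<and> (\<forall>l. (l (fst ij) - l (snd ij))^2 \<le> Cf ij * Sg N E l)"
    by metis
  define C where "C = 1 + (\<Sum>i<N. \<Sum>j<N. Cf (i, j))"
  have C0: "(\<Sum>i<N. \<Sum>j<N. Cf (i, j)) \<ge> 0" using Cf by (intro sum_nonneg) auto
  have "Dg N l \<le> C * Sg N E l" for l
  proof -
    have "Dg N l \<le> (\<Sum>i<N. \<Sum>j<N. Cf (i, j) * Sg N E l)"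
      unfolding Dg_def using Cf by (intro sum_mono) force
    also have "\<dots> = (\<Sum>i<N. \<Sum>j<N. Cf (i, j)) * Sg N E l" by (simp add: sum_distrib_right)
    also have "\<dots> \<le> C * Sg N E l" unfolding C_def using Sg_nonneg[of N E l]
      by (intro mult_right_mono) auto
    finally show ?thesis .
  qed
  moreover have "C > 0" using C0 unfolding C_def by simp
  ultimately show ?thesis by blast
qed



locale prob =
  fixes N :: nat
    and d xl xu :: "nat \<Rightarrow> real"
    and f phi :: "nat \<Rightarrow> real \<Rightarrow> real"
    and E :: "(nat \<times> nat) set"
    and lamstar :: real
  assumes intervals: "\<forall>i<N. xl i \<le> xu i"
    and A1_C1: "\<forall>i<N. f i C1_differentiable_on UNIV \<and> phi i C1_differentiable_on UNIV"
    and A1_fconv: "\<forall>i<N. strictly_convex_on {xl i..xu i} (f i)"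
    and A1_phiconv: "\<forall>i<N. convex_on {xl i..xu i} (phi i)"
    and A1_phider: "\<forall>i<N. \<forall>x\<in>{xl i..xu i}. deriv (phi i) x < 1"
    and A2: "\<forall>i<N. \<forall>x\<in>{xl i..xu i}. deriv (f i) x > 0"
    and A3_nodes: "E \<subseteq> {..<N} \<times> {..<N}"
    and A3_undirected: "sym E"
    and A3_connected: "\<forall>i<N. \<forall>j<N. (i, j) \<in> E\<^sup>*"
    and maximizer: "\<forall>lam. gm N f phi d xl xu lam \<le> gm N f phi d xl xu lamstar"
begin

definition X where "X i mu = xhat (f i) (phi i) (xl i) (xu i) mu"
definition hh where "hh i mu = d i - X i mu + phi i (X i mu)"
definition HH where "HH mu = (\<Sum>i<N. hh i mu)"

lemma ag: "i < N \<Longrightarrow> agent (f i) (phi i) (xl i) (xu i)"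
  unfolding agent_def using intervals A1_C1 A1_fconv A1_phiconv A1_phider A2 by auto

lemma X_in: "i < N \<Longrightarrow> X i mu \<in> {xl i..xu i}"
  unfolding X_def using agent.xh_in[OF ag] by blast

lemma X_mono: "i < N \<Longrightarrow> mu \<le> nu \<Longrightarrow> X i mu \<le> X i nu"
  unfolding X_def using agent.xh_mono[OF ag] by blast

lemma X_cont: "i < N \<Longrightarrow> continuous_on S (X i)"
  unfolding X_def[abs_def] using agent.xh_cont[OF ag] by blast

lemma csep: "\<exists>c>0. \<forall>i<N. \<forall>x y. xl i \<le> x \<longrightarrow> x \<le> y \<longrightarrow> y \<le> xu i \<longrightarrow>
    (y - phi i y) - (x - phi i x) \<ge> c * (y - x)"
proof -
  have "\<forall>i\<in>{..<N}. \<exists>c. c > 0 \<and> (\<forall>x y. xl i \<le> x \<longrightarrow> x \<le> y \<longrightarrow> y \<le> xu i \<longrightarrow>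
    (y - phi i y) - (x - phi i x) \<ge> c * (y - x))" using agent.psi[OF ag] by auto
  then obtain cf where cf: "\<forall>i\<in>{..<N}. cf i > 0 \<and> (\<forall>x y. xl i \<le> x \<longrightarrow> x \<le> y \<longrightarrow> y \<le> xu i \<longrightarrow>
    (y - phi i y) - (x - phi i x) \<ge> cf i * (y - x))" by metis
  define c where "c = Min (insert 1 (cf ` {..<N}))"
  have c0: "c > 0" unfolding c_def using cf by (subst Min_gr_iff) auto
  have "c \<le> cf i" if "i < N" for i unfolding c_def using that by (intro Min_le) auto
  hence "\<forall>i<N. \<forall>x y. xl i \<le> x \<longrightarrow> x \<le> y \<longrightarrow> y \<le> xu i \<longrightarrow>
    (y - phi i y) - (x - phi i x) \<ge> c * (y - x)"
  proof (intro allI impI)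
    fix i x y assume h: "i < N" "xl i \<le> x" "x \<le> y" "y \<le> xu i"
    have "c * (y - x) \<le> cf i * (y - x)" using \<open>\<And>i. i < N \<Longrightarrow> c \<le> cf i\<close>[OF h(1)] h
      by (intro mult_right_mono) auto
    also have "\<dots> \<le> (y - phi i y) - (x - phi i x)" using cf h by auto
    finally show "(y - phi i y) - (x - phi i x) \<ge> c * (y - x)" .
  qed
  thus ?thesis using c0 by blast
qed

lemma h_mono: assumes "i < N" "mu \<le> nu" shows "hh i nu \<le> hh i mu"
proof -
  obtain c where c: "c > 0" "\<forall>i<N. \<forall>x y. xl i \<le> x \<longrightarrow> x \<le> y \<longrightarrow> y \<le> xu i \<longrightarrow>
    (y - phi i y) - (x - phi i x) \<ge> c * (y - x)" using csep by blast
  have "X i mu \<le> X i nu" by (rule X_mono[OF assms])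
  hence "(X i nu - phi i (X i nu)) - (X i mu - phi i (X i mu)) \<ge> c * (X i nu - X i mu)"
    using c(2) X_in[OF assms(1), of mu] X_in[OF assms(1), of nu] assms(1) by auto
  moreover have "c * (X i nu - X i mu) \<ge> 0" using c \<open>X i mu \<le> X i nu\<close> by simp
  ultimately show ?thesis unfolding hh_def by simp
qed

lemma H_mono: "mu \<le> nu \<Longrightarrow> HH nu \<le> HH mu"
  unfolding HH_def by (intro sum_mono h_mono) auto

lemma h_cont: "i < N \<Longrightarrow> continuous_on S (hh i)"
  unfolding hh_def[abs_def]
  by (intro continuous_intros X_cont continuous_on_compose2[OF agent.cont_p[OF ag, of i UNIV] X_cont]) auto

lemma H_cont: "continuous_on S HH"
  unfolding HH_def[abs_def] by (intro continuous_on_sum h_cont) auto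

lemma h_bound: "\<exists>B\<ge>0. \<forall>i<N. \<forall>mu. \<bar>hh i mu\<bar> \<le> B"
proof -
  have "\<forall>i\<in>{..<N}. \<exists>M. \<forall>x\<in>{xl i..xu i}. \<bar>phi i x\<bar> \<le> M" using agent.p_bound[OF ag] by auto
  then obtain Mf where Mf: "\<forall>i\<in>{..<N}. \<forall>x\<in>{xl i..xu i}. \<bar>phi i x\<bar> \<le> Mf i" by metis
  define B where "B = (\<Sum>i<N. \<bar>d i\<bar> + \<bar>xl i\<bar> + \<bar>xu i\<bar> + \<bar>Mf i\<bar>)"
  have B0: "B \<ge> 0" unfolding B_def by (intro sum_nonneg) auto
  have "\<bar>hh i mu\<bar> \<le> B" if "i < N" for i mu
  proof -
    have xi: "X i mu \<in> {xl i..xu i}" by (rule X_in[OF that])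
    have "\<bar>hh i mu\<bar> \<le> \<bar>d i\<bar> + \<bar>xl i\<bar> + \<bar>xu i\<bar> + \<bar>Mf i\<bar>"
    proof -
      have "\<bar>phi i (X i mu)\<bar> \<le> \<bar>Mf i\<bar>" using xi Mf that by fastforce
      moreover have "\<bar>X i mu\<bar> \<le> \<bar>xl i\<bar> + \<bar>xu i\<bar>" using xi by auto
      ultimately show ?thesis unfolding hh_def by linarith
    qed
    also have "\<dots> \<le> B" unfolding B_def
      by (rule member_le_sum[where f = "\<lambda>i. \<bar>d i\<bar> + \<bar>xl i\<bar> + \<bar>xu i\<bar> + \<bar>Mf i\<bar>"]) (use that in auto)
    finally show ?thesis .
  qed
  thus ?thesis using B0 by blast
qed

lemma superg: "gm N f phi d xl xu nu \<le> gm N f phi d xl xu mu + (nu - mu) * HH mu"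
proof -
  have "gm N f phi d xl xu nu \<le> (\<Sum>i<N. lagr_loc (f i) (phi i) (d i) (X i mu) nu)"
    unfolding gm_def lagr_loc_def X_def[symmetric]
    by (intro sum_mono) (use agent.xh_min[OF ag X_in] in \<open>auto simp: X_def\<close>)
  also have "\<dots> = (\<Sum>i<N. lagr_loc (f i) (phi i) (d i) (X i mu) mu + (nu - mu) * hh i mu)"
    unfolding lagr_loc_def hh_def by (intro sum.cong refl) (simp add: algebra_simps)
  also have "\<dots> = gm N f phi d xl xu mu + (nu - mu) * HH mu"
    unfolding gm_def HH_def X_def by (simp add: sum.distrib sum_distrib_left)
  finally show ?thesis .
qed

lemma H_right: assumes "mu > lamstar" shows "HH mu \<le> 0"
proof -
  have "0 \<le> (lamstar - mu) * HH mu" using superg[of lamstar mu] maximizer[rule_format, of mu] by simp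
  thus ?thesis using assms by (simp add: zero_le_mult_iff)
qed

lemma H_left: assumes "mu < lamstar" shows "HH mu \<ge> 0"
proof -
  have "0 \<le> (lamstar - mu) * HH mu" using superg[of lamstar mu] maximizer[rule_format, of mu] by simp
  thus ?thesis using assms by (simp add: zero_le_mult_iff)
qed

lemma H_star: "HH lamstar = 0"
proof -
  have c: "(HH \<longlongrightarrow> HH lamstar) (at_right lamstar)" "(HH \<longlongrightarrow> HH lamstar) (at_left lamstar)"
    using H_cont[of UNIV] by (auto simp: continuous_on_def intro: tendsto_mono at_le)
  have "HH lamstar \<le> 0"
    by (rule tendsto_upperbound[OF c(1)])
       (auto simp: eventually_at_right_less intro: eventually_mono[OF eventually_at_right_less] H_right)
  moreover have "HH lamstar \<ge> 0"
    by (rule tendsto_lowerbound[OF c(2)])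
       (rule eventually_mono[OF eventually_at_left_real[of "lamstar - 1" lamstar]], auto intro: H_left)
  ultimately show ?thesis by simp
qed

end


context prob begin

lemma good_up:
  assumes c: "c > 0" "\<forall>i<N. \<forall>x y. xl i \<le> x \<longrightarrow> x \<le> y \<longrightarrow> y \<le> xu i \<longrightarrow>
    (y - phi i y) - (x - phi i x) \<ge> c * (y - x)"
    and mu: "lamstar \<le> mu" "HH mu \<ge> - (c * e)" and i: "i < N"
  shows "\<bar>X i mu - X i lamstar\<bar> \<le> e"
proof -
  have t0: "\<forall>j\<in>{..<N}. hh j lamstar - hh j mu \<ge> 0" using h_mono mu by auto
  have "hh i lamstar - hh i mu \<le> (\<Sum>j<N. hh j lamstar - hh j mu)"
    by (rule member_le_sum[where f = "\<lambda>j. hh j lamstar - hh j mu"]) (use t0 i in auto)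
  also have "\<dots> = HH lamstar - HH mu" unfolding HH_def by (simp add: sum_subtractf)
  also have "\<dots> \<le> c * e" using H_star mu by simp
  finally have A: "hh i lamstar - hh i mu \<le> c * e" .
  have xm: "X i lamstar \<le> X i mu" by (rule X_mono[OF i mu(1)])
  have "hh i lamstar - hh i mu \<ge> c * (X i mu - X i lamstar)"
    using c(2)[rule_format, OF i, of "X i lamstar" "X i mu"] X_in[OF i, of mu] X_in[OF i, of lamstar] xm
    unfolding hh_def by auto
  hence "c * (X i mu - X i lamstar) \<le> c * e" using A by simp
  hence "X i mu - X i lamstar \<le> e" using c(1) by simp
  thus ?thesis using xm by simp
qed

lemma good_low:
  assumes c: "c > 0" "\<forall>i<N. \<forall>x y. xl i \<le> x \<longrightarrow> x \<le> y \<longrightarrow> y \<le> xu i \<longrightarrow>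
    (y - phi i y) - (x - phi i x) \<ge> c * (y - x)"
    and mu: "mu \<le> lamstar" "HH mu \<le> c * e" and i: "i < N"
  shows "\<bar>X i mu - X i lamstar\<bar> \<le> e"
proof -
  have t0: "\<forall>j\<in>{..<N}. hh j mu - hh j lamstar \<ge> 0" using h_mono mu by auto
  have "hh i mu - hh i lamstar \<le> (\<Sum>j<N. hh j mu - hh j lamstar)"
    by (rule member_le_sum[where f = "\<lambda>j. hh j mu - hh j lamstar"]) (use t0 i in auto)
  also have "\<dots> = HH mu - HH lamstar" unfolding HH_def by (simp add: sum_subtractf)
  also have "\<dots> \<le> c * e" using H_star mu by simp
  finally have A: "hh i mu - hh i lamstar \<le> c * e" .
  have xm: "X i mu \<le> X i lamstar" by (rule X_mono[OF i mu(1)])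
  have "hh i mu - hh i lamstar \<ge> c * (X i lamstar - X i mu)"
    using c(2)[rule_format, OF i, of "X i mu" "X i lamstar"] X_in[OF i, of mu] X_in[OF i, of lamstar] xm
    unfolding hh_def by auto
  hence "c * (X i lamstar - X i mu) \<le> c * e" using A by simp
  hence "X i lamstar - X i mu \<le> e" using c(1) by simp
  thus ?thesis using xm by simp
qed

definition ode where
  "ode k lam \<longleftrightarrow> (\<forall>i<N. \<forall>t\<ge>0. ((\<lambda>s. lam s i) has_real_derivative
       (hh i (lam t i) + k * ug N E (lam t) i)) (at t within {0..}))"

lemma L_deriv:
  assumes "ode k lam" "t \<ge> 0"
  shows "((\<lambda>s. \<Sum>i<N. lam s i) has_real_derivative (\<Sum>i<N. hh i (lam t i))) (at t within {0..})"
proof -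
  have "((\<lambda>s. \<Sum>i<N. lam s i) has_real_derivative (\<Sum>i<N. hh i (lam t i) + k * ug N E (lam t) i)) (at t within {0..})"
    using assms unfolding ode_def by (intro DERIV_sum) auto
  moreover have "(\<Sum>i<N. hh i (lam t i) + k * ug N E (lam t) i) = (\<Sum>i<N. hh i (lam t i))"
    using I1[OF A3_undirected, where N=N and l="lam t"] by (simp add: sum.distrib sum_distrib_left[symmetric])
  ultimately show ?thesis by simp
qed

lemma D_deriv:
  assumes "ode k lam" "t \<ge> 0"
  shows "((\<lambda>s. Dg N (lam s)) has_real_derivative
     (\<Sum>i<N. \<Sum>j<N. 2 * (lam t i - lam t j) * ((hh i (lam t i) + k * ug N E (lam t) i) - (hh j (lam t j) + k * ug N E (lam t) j))))
     (at t within {0..})"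
  unfolding Dg_def using assms unfolding ode_def
  by (intro DERIV_sum) (auto intro!: derivative_eq_intros)

end


lemma amgm_term:
  fixes w p q B th :: real
  assumes "\<bar>p\<bar> \<le> B" "\<bar>q\<bar> \<le> B" "th > 0"
  shows "2 * w * (p - q) \<le> th * w^2 + 4 * B^2 / th"
proof -
  have "2 * w * (p - q) \<le> 2 * \<bar>w\<bar> * \<bar>p - q\<bar>" by (simp add: abs_mult[symmetric])
  also have "\<dots> \<le> 2 * \<bar>w\<bar> * (2 * B)" using assms by (intro mult_left_mono) auto
  also have "\<dots> \<le> th * w^2 + 4 * B^2 / th"
  proof -
    have "0 \<le> (th * \<bar>w\<bar> - 2 * B)^2" by simp
    hence "4 * B * th * \<bar>w\<bar> \<le> th^2 * w^2 + 4 * B^2"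
      by (simp add: power2_eq_square algebra_simps)
    hence "4 * B * \<bar>w\<bar> \<le> (th^2 * w^2 + 4 * B^2) / th" using assms(3)
      by (simp add: field_simps)
    also have "\<dots> = th * w^2 + 4 * B^2 / th" using assms(3) by (simp add: field_simps power2_eq_square)
    finally show ?thesis by (simp add: mult_ac)
  qed
  finally show ?thesis .
qed

context prob begin

lemma Dp_bound:
  fixes k B C :: real
  assumes B: "\<forall>i<N. \<forall>mu. \<bar>hh i mu\<bar> \<le> B" and C: "C > 0" "\<forall>l. Dg N l \<le> C * Sg N E l"
    and k: "k > 0" and N: "N > 0"
  shows "(\<Sum>i<N. \<Sum>j<N. 2 * (l i - l j) * ((hh i (l i) + k * ug N E l i) - (hh j (l j) + k * ug N E l j)))
     \<le> - (k * N / C) * Dg N l + 4 * N * B^2 * C / k"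
proof -
  define th where "th = k * N / C"
  have th: "th > 0" unfolding th_def using k N C by simp
  have split: "(\<Sum>i<N. \<Sum>j<N. 2 * (l i - l j) * ((hh i (l i) + k * ug N E l i) - (hh j (l j) + k * ug N E l j)))
    = (\<Sum>i<N. \<Sum>j<N. 2 * (l i - l j) * (hh i (l i) - hh j (l j)))
      + 2 * k * (\<Sum>i<N. \<Sum>j<N. (l i - l j) * (ug N E l i - ug N E l j))"
  proof -
    have "(\<Sum>i<N. \<Sum>j<N. 2 * (l i - l j) * ((hh i (l i) + k * ug N E l i) - (hh j (l j) + k * ug N E l j)))
      = (\<Sum>i<N. \<Sum>j<N. 2 * (l i - l j) * (hh i (l i) - hh j (l j)) + 2 * k * ((l i - l j) * (ug N E l i - ug N E l j)))"
      by (intro sum.cong refl) (simp add: algebra_simps)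
    thus ?thesis by (simp add: sum.distrib sum_distrib_left)
  qed
  have second: "(\<Sum>i<N. \<Sum>j<N. (l i - l j) * (ug N E l i - ug N E l j)) = - (real N * Sg N E l)"
    using I3[where N=N and l=l and w="ug N E l"] I1[OF A3_undirected, where N=N and l=l] I2[OF A3_undirected, where N=N and l=l] by simp
  have first: "(\<Sum>i<N. \<Sum>j<N. 2 * (l i - l j) * (hh i (l i) - hh j (l j)))
      \<le> (\<Sum>i<N. \<Sum>j<N. th * (l i - l j)^2 + 4 * B^2 / th)"
    using B th by (intro sum_mono amgm_term) auto
  also have "\<dots> = th * Dg N l + N * N * (4 * B^2 / th)"
    unfolding Dg_def by (simp add: sum.distrib sum_distrib_left)
  finally have first': "(\<Sum>i<N. \<Sum>j<N. 2 * (l i - l j) * (hh i (l i) - hh j (l j))) \<le> th * Dg N l + N * N * (4 * B^2 / th)" .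
  have S: "Dg N l / C \<le> Sg N E l" using C by (simp add: field_simps)
  have "2 * k * (- (real N * Sg N E l)) \<le> 2 * k * (- (real N * (Dg N l / C)))"
  proof -
    have "real N * (Dg N l / C) \<le> real N * Sg N E l" using S by (intro mult_left_mono) auto
    hence "- (real N * Sg N E l) \<le> - (real N * (Dg N l / C))" by linarith
    thus ?thesis by (rule mult_left_mono[of _ _ "2*k"]) (use k in auto)
  qed
  also have "\<dots> = - (2 * (th * Dg N l))" unfolding th_def by (simp add: field_simps)
  finally have sec': "2 * k * (- (real N * Sg N E l)) \<le> - (2 * (th * Dg N l))" .
  have fin: "- (th * Dg N l) + N * N * (4 * B^2 / th) = - (k * N / C) * Dg N l + 4 * N * B^2 * C / k"
    unfolding th_def using k C N by (simp add: field_simps)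
  have "(\<Sum>i<N. \<Sum>j<N. 2 * (l i - l j) * ((hh i (l i) + k * ug N E l i) - (hh j (l j) + k * ug N E l j))) \<le> - (th * Dg N l) + N * N * (4 * B^2 / th)"
  proof -
    have "(\<Sum>i<N. \<Sum>j<N. 2 * (l i - l j) * ((hh i (l i) + k * ug N E l i) - (hh j (l j) + k * ug N E l j)))
      = (\<Sum>i<N. \<Sum>j<N. 2 * (l i - l j) * (hh i (l i) - hh j (l j))) + 2 * k * (- (real N * Sg N E l))"
      using split second by simp
    thus ?thesis using first' sec' by linarith
  qed
  thus ?thesis using fin by simp
qed

end


lemma term_le_Dg: assumes "i < N" "j < N" shows "(l i - l j)^2 \<le> Dg N l"
proof -
  have "(l i - l j)^2 \<le> (\<Sum>j'<N. (l i - l j')^2)"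
    by (rule member_le_sum[where f = "\<lambda>j'. (l i - l j')^2"]) (use assms in auto)
  also have "\<dots> \<le> Dg N l" unfolding Dg_def
    by (rule member_le_sum[where f = "\<lambda>i. \<Sum>j'<N. (l i - l j')^2"]) (use assms in \<open>auto intro: sum_nonneg\<close>)
  finally show ?thesis .
qed

context prob begin

lemma D_phase:
  fixes k B C rho :: real
  assumes B: "\<forall>i<N. \<forall>mu. \<bar>hh i mu\<bar> \<le> B" "B \<ge> 0" and C: "C > 0" "\<forall>l. Dg N l \<le> C * Sg N E l"
    and N: "N > 0" and rho: "rho > 0" and k: "k \<ge> 1" "k * N * rho^2 / C \<ge> 1 + 4 * N * B^2 * C"
    and o: "ode k lam" and t: "t \<ge> Dg N (lam 0)"
  shows "Dg N (lam t) \<le> rho^2"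
proof -
  let ?g' = "\<lambda>t. (\<Sum>i<N. \<Sum>j<N. 2 * (lam t i - lam t j) * ((hh i (lam t i) + k * ug N E (lam t) i) - (hh j (lam t j) + k * ug N E (lam t) j)))"
  have t0: "t \<ge> 0" using t unfolding Dg_def by (smt (verit) sum_nonneg zero_le_power2)
  have "Dg N (lam t) \<le> max (rho^2) (Dg N (lam 0) - 1 * (t - 0))"
  proof (rule barrier[where g' = ?g'])
    show "\<forall>t\<ge>0. ((\<lambda>s. Dg N (lam s)) has_real_derivative ?g' t) (at t within {0..})"
      using D_deriv[OF o] by blast
    show "\<forall>t\<ge>0. rho^2 < Dg N (lam t) \<longrightarrow> ?g' t \<le> - 1"
    proof (intro allI impI)
      fix s :: real assume s: "0 \<le> s" "rho^2 < Dg N (lam s)"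
      have kp: "k > 0" using k by simp
      have "?g' s \<le> - (k * N / C) * Dg N (lam s) + 4 * N * B^2 * C / k"
        by (rule Dp_bound[OF B(1) C kp N])
      also have "- (k * N / C) * Dg N (lam s) \<le> - (k * N / C) * rho^2"
        using s kp C N by (intro mult_left_mono_neg) auto
      hence "- (k * N / C) * Dg N (lam s) + 4 * N * B^2 * C / k \<le> - (k * N * rho^2 / C) + 4 * N * B^2 * C / k"
        by simp
      also have "4 * N * B^2 * C / k \<le> 4 * N * B^2 * C"
      proof -
        have X0: "0 \<le> 4 * N * B^2 * C" using B C by simp
        have "4 * N * B^2 * C / k \<le> 4 * N * B^2 * C / 1"
          by (rule divide_left_mono[OF k(1) X0]) (use k in simp)
        thus ?thesis by simp
      qed
      hence "- (k * N * rho^2 / C) + 4 * N * B^2 * C / k \<le> -1" using k(2) by linarith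
      finally show "?g' s \<le> -1" .
    qed
  qed (use t0 in auto)
  moreover have "max (rho^2) (Dg N (lam 0) - 1 * (t - 0)) = rho^2"
  proof (rule max_absorb1)
    have "(0::real) \<le> rho^2" by simp
    thus "Dg N (lam 0) - 1 * (t - 0) \<le> rho^2" using t by (smt (verit) zero_le_power2)
  qed
  ultimately show ?thesis by simp
qed

lemma spread:
  assumes "Dg N l \<le> rho^2" "rho \<ge> 0" "i < N" "j < N"
  shows "\<bar>l i - l j\<bar> \<le> rho"
  using term_le_Dg[OF assms(3,4), of l] assms(1,2) power2_le_iff_abs_le by fastforce

end


context prob begin

lemma hsum_bound:
  fixes B :: real
  assumes B: "\<forall>i<N. \<forall>mu. \<bar>hh i mu\<bar> \<le> B"
  shows "\<bar>\<Sum>i<N. hh i (l i)\<bar> \<le> N * B"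
proof -
  have "\<bar>\<Sum>i<N. hh i (l i)\<bar> \<le> (\<Sum>i<N. \<bar>hh i (l i)\<bar>)" by (rule sum_abs)
  also have "\<dots> \<le> (\<Sum>i<N. B)" using B by (intro sum_mono) auto
  finally show ?thesis by simp
qed

lemma avg_low:
  fixes l :: "nat \<Rightarrow> real" and rho :: real
  assumes sp: "\<forall>i<N. \<forall>j<N. \<bar>l i - l j\<bar> \<le> rho" and i: "i < N"
  shows "N * l i \<ge> (\<Sum>j<N. l j) - N * rho" and "N * l i \<le> (\<Sum>j<N. l j) + N * rho"
proof -
  have eq: "N * l i - (\<Sum>j<N. l j) = (\<Sum>j<N. l i - l j)" by (simp add: sum_subtractf)
  have "(\<Sum>j<N. l i - l j) \<ge> (\<Sum>j<N. - rho)" using sp i by (intro sum_mono) force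
  thus "N * l i \<ge> (\<Sum>j<N. l j) - N * rho" using eq by simp
  have "(\<Sum>j<N. l i - l j) \<le> (\<Sum>j<N. rho)" using sp i by (intro sum_mono) force
  thus "N * l i \<le> (\<Sum>j<N. l j) + N * rho" using eq by simp
qed

lemma Lam_T0:
  fixes B :: real
  assumes B: "\<forall>i<N. \<forall>mu. \<bar>hh i mu\<bar> \<le> B" and o: "ode k lam" and T0: "T0 \<ge> 0"
  shows "(\<Sum>i<N. lam T0 i) \<le> (\<Sum>i<N. lam 0 i) + N * B * T0"
    and "(\<Sum>i<N. lam T0 i) \<ge> (\<Sum>i<N. lam 0 i) - N * B * T0"
proof -
  have "(\<Sum>i<N. lam T0 i) - N * B * T0 \<le> max ((\<Sum>i<N. lam 0 i) - N * B * 0) ((\<Sum>i<N. lam 0 i) - N * B * 0 - 0 * (T0 - 0))"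
  proof (rule barrier[where g = "\<lambda>s. (\<Sum>i<N. lam s i) - N * B * s" and g' = "\<lambda>s. (\<Sum>i<N. hh i (lam s i)) - N * B"])
    show "\<forall>t\<ge>0. ((\<lambda>s. (\<Sum>i<N. lam s i) - N * B * s) has_real_derivative (\<Sum>i<N. hh i (lam t i)) - N * B) (at t within {0..})"
    proof (intro allI impI)
      fix t :: real assume "0 \<le> t"
      hence L: "((\<lambda>s. \<Sum>i<N. lam s i) has_real_derivative (\<Sum>i<N. hh i (lam t i))) (at t within {0..})" by (rule L_deriv[OF o])
      have "((\<lambda>s. N * B * s) has_real_derivative N * B) (at t within {0..})" by (auto intro!: derivative_eq_intros)
      from DERIV_diff[OF L this] show "((\<lambda>s. (\<Sum>i<N. lam s i) - N * B * s) has_real_derivative (\<Sum>i<N. hh i (lam t i)) - N * B) (at t within {0..})" .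
    qed
    show "\<forall>t\<ge>0. (\<Sum>i<N. lam 0 i) - N * B * 0 < (\<Sum>i<N. lam t i) - N * B * t \<longrightarrow> (\<Sum>i<N. hh i (lam t i)) - N * B \<le> - 0"
      using hsum_bound[OF B] by (auto simp: abs_le_iff)
  qed (use T0 in auto)
  thus "(\<Sum>i<N. lam T0 i) \<le> (\<Sum>i<N. lam 0 i) + N * B * T0" by simp
  have "- (\<Sum>i<N. lam T0 i) - N * B * T0 \<le> max (- (\<Sum>i<N. lam 0 i) - N * B * 0) (- (\<Sum>i<N. lam 0 i) - N * B * 0 - 0 * (T0 - 0))"
  proof (rule barrier[where g = "\<lambda>s. - (\<Sum>i<N. lam s i) - N * B * s" and g' = "\<lambda>s. - (\<Sum>i<N. hh i (lam s i)) - N * B"])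
    show "\<forall>t\<ge>0. ((\<lambda>s. - (\<Sum>i<N. lam s i) - N * B * s) has_real_derivative - (\<Sum>i<N. hh i (lam t i)) - N * B) (at t within {0..})"
    proof (intro allI impI)
      fix t :: real assume "0 \<le> t"
      hence L: "((\<lambda>s. \<Sum>i<N. lam s i) has_real_derivative (\<Sum>i<N. hh i (lam t i))) (at t within {0..})" by (rule L_deriv[OF o])
      have "((\<lambda>s. N * B * s) has_real_derivative N * B) (at t within {0..})" by (auto intro!: derivative_eq_intros)
      from DERIV_diff[OF DERIV_minus[OF L] this] show "((\<lambda>s. - (\<Sum>i<N. lam s i) - N * B * s) has_real_derivative - (\<Sum>i<N. hh i (lam t i)) - N * B) (at t within {0..})" .
    qed
    show "\<forall>t\<ge>0. - (\<Sum>i<N. lam 0 i) - N * B * 0 < - (\<Sum>i<N. lam t i) - N * B * t \<longrightarrow> - (\<Sum>i<N. hh i (lam t i)) - N * B \<le> - 0"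
      using hsum_bound[OF B] by (auto simp: abs_le_iff)
  qed (use T0 in auto)
  thus "(\<Sum>i<N. lam T0 i) \<ge> (\<Sum>i<N. lam 0 i) - N * B * T0" by simp
qed

lemma L_up:
  fixes B rho eta lam1 T0 :: real
  assumes B: "\<forall>i<N. \<forall>mu. \<bar>hh i mu\<bar> \<le> B" "B \<ge> 0" and N: "N > 0" and o: "ode k lam" and T0: "T0 \<ge> 0"
    and sp: "\<forall>t\<ge>T0. \<forall>i<N. \<forall>j<N. \<bar>lam t i - lam t j\<bar> \<le> rho"
    and eta: "eta > 0" and H1: "HH lam1 \<le> - (eta / 2)"
    and t: "t \<ge> T0 + 2 * (\<bar>\<Sum>i<N. lam 0 i\<bar> + N * B * T0 + N * \<bar>lam1 + rho\<bar>) / eta"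
  shows "(\<Sum>i<N. lam t i) \<le> N * (lam1 + rho)"
proof -
  have "0 \<le> 2 * (\<bar>\<Sum>i<N. lam 0 i\<bar> + N * B * T0 + N * \<bar>lam1 + rho\<bar>) / eta"
    using eta B T0 by (intro divide_nonneg_pos) auto
  hence tT: "t \<ge> T0" using t by linarith
  have "(\<Sum>i<N. lam t i) \<le> max (N * (lam1 + rho)) ((\<Sum>i<N. lam T0 i) - (eta / 2) * (t - T0))"
  proof (rule barrier[where g = "\<lambda>s. \<Sum>i<N. lam s i" and g' = "\<lambda>s. \<Sum>i<N. hh i (lam s i)"])
    show "\<forall>s\<ge>T0. ((\<lambda>s. \<Sum>i<N. lam s i) has_real_derivative (\<Sum>i<N. hh i (lam s i))) (at s within {T0..})"
    proof (intro allI impI)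
      fix s :: real assume "T0 \<le> s"
      hence "((\<lambda>s. \<Sum>i<N. lam s i) has_real_derivative (\<Sum>i<N. hh i (lam s i))) (at s within {0..})"
        using T0 by (intro L_deriv[OF o]) auto
      thus "((\<lambda>s. \<Sum>i<N. lam s i) has_real_derivative (\<Sum>i<N. hh i (lam s i))) (at s within {T0..})"
        by (rule DERIV_subset) (use T0 in auto)
    qed
    show "\<forall>s\<ge>T0. N * (lam1 + rho) < (\<Sum>i<N. lam s i) \<longrightarrow> (\<Sum>i<N. hh i (lam s i)) \<le> - (eta / 2)"
    proof (intro allI impI)
      fix s assume s: "s \<ge> T0" "N * (lam1 + rho) < (\<Sum>i<N. lam s i)"
      have "hh i (lam s i) \<le> hh i lam1" if i: "i < N" for i
      proof -
        have "N * lam s i \<ge> (\<Sum>j<N. lam s j) - N * rho" using avg_low(1)[OF _ i] sp s by blast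
        hence "N * lam s i > N * lam1" using s by (simp add: algebra_simps)
        hence "lam s i > lam1" using N by simp
        thus ?thesis using h_mono[OF i] by simp
      qed
      hence "(\<Sum>i<N. hh i (lam s i)) \<le> HH lam1" unfolding HH_def by (intro sum_mono) auto
      thus "(\<Sum>i<N. hh i (lam s i)) \<le> - (eta / 2)" using H1 by simp
    qed
  qed (use eta tT in auto)
  moreover have "(\<Sum>i<N. lam T0 i) - (eta / 2) * (t - T0) \<le> N * (lam1 + rho)"
  proof -
    have "(eta / 2) * (t - T0) \<ge> \<bar>\<Sum>i<N. lam 0 i\<bar> + N * B * T0 + N * \<bar>lam1 + rho\<bar>"
      using t eta by (simp add: field_simps)
    moreover have "(\<Sum>i<N. lam T0 i) \<le> (\<Sum>i<N. lam 0 i) + N * B * T0" by (rule Lam_T0(1)[OF B(1) o T0])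
    moreover have "N * \<bar>lam1 + rho\<bar> \<ge> - (N * (lam1 + rho))"
      by (smt (verit) abs_ge_minus_self mult_left_mono of_nat_0_le_iff mult_minus_right)
    ultimately show ?thesis by linarith
  qed
  ultimately show ?thesis by simp
qed

lemma L_low:
  fixes B rho eta mu1 T0 :: real
  assumes B: "\<forall>i<N. \<forall>mu. \<bar>hh i mu\<bar> \<le> B" "B \<ge> 0" and N: "N > 0" and o: "ode k lam" and T0: "T0 \<ge> 0"
    and sp: "\<forall>t\<ge>T0. \<forall>i<N. \<forall>j<N. \<bar>lam t i - lam t j\<bar> \<le> rho"
    and eta: "eta > 0" and H1: "HH mu1 \<ge> eta / 2"
    and t: "t \<ge> T0 + 2 * (\<bar>\<Sum>i<N. lam 0 i\<bar> + N * B * T0 + N * \<bar>mu1 - rho\<bar>) / eta"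
  shows "(\<Sum>i<N. lam t i) \<ge> N * (mu1 - rho)"
proof -
  have "0 \<le> 2 * (\<bar>\<Sum>i<N. lam 0 i\<bar> + N * B * T0 + N * \<bar>mu1 - rho\<bar>) / eta"
    using eta B T0 by (intro divide_nonneg_pos) auto
  hence tT: "t \<ge> T0" using t by linarith
  have "- (\<Sum>i<N. lam t i) \<le> max (- (N * (mu1 - rho))) (- (\<Sum>i<N. lam T0 i) - (eta / 2) * (t - T0))"
  proof (rule barrier[where g = "\<lambda>s. - (\<Sum>i<N. lam s i)" and g' = "\<lambda>s. - (\<Sum>i<N. hh i (lam s i))"])
    show "\<forall>s\<ge>T0. ((\<lambda>s. - (\<Sum>i<N. lam s i)) has_real_derivative - (\<Sum>i<N. hh i (lam s i))) (at s within {T0..})"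
    proof (intro allI impI)
      fix s :: real assume "T0 \<le> s"
      hence "((\<lambda>s. \<Sum>i<N. lam s i) has_real_derivative (\<Sum>i<N. hh i (lam s i))) (at s within {0..})"
        using T0 by (intro L_deriv[OF o]) auto
      hence "((\<lambda>s. \<Sum>i<N. lam s i) has_real_derivative (\<Sum>i<N. hh i (lam s i))) (at s within {T0..})"
        by (rule DERIV_subset) (use T0 in auto)
      thus "((\<lambda>s. - (\<Sum>i<N. lam s i)) has_real_derivative - (\<Sum>i<N. hh i (lam s i))) (at s within {T0..})"
        by (rule DERIV_minus)
    qed
    show "\<forall>s\<ge>T0. - (N * (mu1 - rho)) < - (\<Sum>i<N. lam s i) \<longrightarrow> - (\<Sum>i<N. hh i (lam s i)) \<le> - (eta / 2)"
    proof (intro allI impI)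
      fix s assume s: "s \<ge> T0" "- (N * (mu1 - rho)) < - (\<Sum>i<N. lam s i)"
      have "hh i mu1 \<le> hh i (lam s i)" if i: "i < N" for i
      proof -
        have "N * lam s i \<le> (\<Sum>j<N. lam s j) + N * rho" using avg_low(2)[OF _ i] sp s by blast
        hence "N * lam s i < N * mu1" using s by (simp add: algebra_simps)
        hence "lam s i < mu1" using N by simp
        thus ?thesis using h_mono[OF i] by simp
      qed
      hence "HH mu1 \<le> (\<Sum>i<N. hh i (lam s i))" unfolding HH_def by (intro sum_mono) auto
      thus "- (\<Sum>i<N. hh i (lam s i)) \<le> - (eta / 2)" using H1 by simp
    qed
  qed (use eta tT in auto)
  moreover have "- (\<Sum>i<N. lam T0 i) - (eta / 2) * (t - T0) \<le> - (N * (mu1 - rho))"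
  proof -
    have "(eta / 2) * (t - T0) \<ge> \<bar>\<Sum>i<N. lam 0 i\<bar> + N * B * T0 + N * \<bar>mu1 - rho\<bar>"
      using t eta by (simp add: field_simps)
    moreover have "(\<Sum>i<N. lam T0 i) \<ge> (\<Sum>i<N. lam 0 i) - N * B * T0" by (rule Lam_T0(2)[OF B(1) o T0])
    moreover have "N * \<bar>mu1 - rho\<bar> \<ge> N * (mu1 - rho)"
      by (intro mult_left_mono) auto
    ultimately show ?thesis by linarith
  qed
  ultimately show ?thesis by simp
qed

end


context prob begin

lemma H_eps: "\<exists>s>0. \<forall>x. \<bar>x - a\<bar> < s \<longrightarrow> \<bar>HH x - HH a\<bar> < r" if r: "r > 0"
proof -
  have "isCont HH a" using H_cont[of UNIV] by (simp add: continuous_on_eq_continuous_at)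
  hence "\<exists>s>0. \<forall>x. x \<noteq> a \<and> norm (x - a) < s \<longrightarrow> norm (HH x - HH a) < r"
    unfolding isCont_def LIM_eq using r by blast
  then obtain s where "s > 0" "\<forall>x. x \<noteq> a \<and> \<bar>x - a\<bar> < s \<longrightarrow> \<bar>HH x - HH a\<bar> < r" by auto
  hence "\<forall>x. \<bar>x - a\<bar> < s \<longrightarrow> \<bar>HH x - HH a\<bar> < r" using r by (metis abs_zero diff_self)
  thus ?thesis using \<open>s > 0\<close> by blast
qed

lemma upper_choice:
  assumes eta: "eta > 0"
  shows "\<exists>lam1 ru. ru > 0 \<and> (\<forall>mu. lamstar \<le> mu \<longrightarrow> mu \<le> lam1 + 2 * ru \<longrightarrow> HH mu \<ge> - eta)
     \<and> ((\<forall>mu\<ge>lamstar. HH mu \<ge> - eta) \<or> HH lam1 \<le> - (eta / 2))"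
proof (cases "\<forall>mu\<ge>lamstar. HH mu \<ge> - eta")
  case True thus ?thesis by (intro exI[of _ lamstar] exI[of _ 1]) auto
next
  case False
  then obtain mu2 where mu2: "mu2 \<ge> lamstar" "HH mu2 < - eta" by auto
  obtain lam1 where l1: "lamstar \<le> lam1" "lam1 \<le> mu2" "HH lam1 = - (eta / 2)"
    using IVT2'[of HH mu2 "- (eta/2)" lamstar] mu2 H_star eta H_cont by force
  obtain s where s: "s > 0" "\<forall>x. \<bar>x - lam1\<bar> < s \<longrightarrow> \<bar>HH x - HH lam1\<bar> < eta / 2"
    using H_eps[of "eta/2" lam1] eta by auto
  have "HH mu \<ge> - eta" if "lamstar \<le> mu" "mu \<le> lam1 + 2 * (s/3)" for mu
  proof (cases "mu \<le> lam1")
    case True thus ?thesis using H_mono[OF True] l1 eta by simp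
  next
    case False
    hence "\<bar>mu - lam1\<bar> < s" using that s by simp
    hence "\<bar>HH mu - HH lam1\<bar> < eta / 2" using s by blast
    thus ?thesis using l1 by linarith
  qed
  thus ?thesis using s l1 by (intro exI[of _ lam1] exI[of _ "s/3"]) auto
qed

lemma lower_choice:
  assumes eta: "eta > 0"
  shows "\<exists>mu1 rl. rl > 0 \<and> (\<forall>mu. mu \<le> lamstar \<longrightarrow> mu1 - 2 * rl \<le> mu \<longrightarrow> HH mu \<le> eta)
     \<and> ((\<forall>mu\<le>lamstar. HH mu \<le> eta) \<or> HH mu1 \<ge> eta / 2)"
proof (cases "\<forall>mu\<le>lamstar. HH mu \<le> eta")
  case True thus ?thesis by (intro exI[of _ lamstar] exI[of _ 1]) auto
next
  case False
  then obtain mu2 where mu2: "mu2 \<le> lamstar" "HH mu2 > eta" by auto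
  obtain mu1 where l1: "mu2 \<le> mu1" "mu1 \<le> lamstar" "HH mu1 = eta / 2"
    using IVT2'[of HH lamstar "eta/2" mu2] mu2 H_star eta H_cont by force
  obtain s where s: "s > 0" "\<forall>x. \<bar>x - mu1\<bar> < s \<longrightarrow> \<bar>HH x - HH mu1\<bar> < eta / 2"
    using H_eps[of "eta/2" mu1] eta by auto
  have "HH mu \<le> eta" if "mu \<le> lamstar" "mu1 - 2 * (s/3) \<le> mu" for mu
  proof (cases "mu1 \<le> mu")
    case True thus ?thesis using H_mono[OF True] l1 eta by simp
  next
    case False
    hence "\<bar>mu - mu1\<bar> < s" using that s by simp
    hence "\<bar>HH mu - HH mu1\<bar> < eta / 2" using s by blast
    thus ?thesis using l1 by linarith
  qed
  thus ?thesis using s l1 by (intro exI[of _ mu1] exI[of _ "s/3"]) auto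
qed

end


context prob begin

lemma main:
  shows "\<forall>\<epsilon>>0. \<exists>kbar>0. \<exists>T :: (nat \<Rightarrow> real) \<Rightarrow> real \<Rightarrow> real.
           \<forall>k>kbar. \<forall>lam0 :: nat \<Rightarrow> real. \<forall>lam :: real \<Rightarrow> nat \<Rightarrow> real.
             ((\<forall>i<N. lam 0 i = lam0 i) \<and>
              (\<forall>i<N. \<forall>t\<ge>0. ((\<lambda>s. lam s i) has_real_derivative
                  (d i - xhat (f i) (phi i) (xl i) (xu i) (lam t i)
                       + phi i (xhat (f i) (phi i) (xl i) (xu i) (lam t i))
                       + k * (\<Sum>j\<in>{j. (j, i) \<in> E}. lam t j - lam t i))) (at t within {0..})))
             \<longrightarrow> (\<forall>i<N. \<forall>t\<ge>T lam0 k.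
                    \<bar>xhat (f i) (phi i) (xl i) (xu i) (lam t i)
                      - xhat (f i) (phi i) (xl i) (xu i) lamstar\<bar> \<le> \<epsilon>)"
proof (intro allI impI)
  fix eps :: real assume eps: "eps > 0"
  show "\<exists>kbar>0. \<exists>T :: (nat \<Rightarrow> real) \<Rightarrow> real \<Rightarrow> real.
           \<forall>k>kbar. \<forall>lam0 :: nat \<Rightarrow> real. \<forall>lam :: real \<Rightarrow> nat \<Rightarrow> real.
             ((\<forall>i<N. lam 0 i = lam0 i) \<and>
              (\<forall>i<N. \<forall>t\<ge>0. ((\<lambda>s. lam s i) has_real_derivative
                  (d i - xhat (f i) (phi i) (xl i) (xu i) (lam t i)
                       + phi i (xhat (f i) (phi i) (xl i) (xu i) (lam t i))
                       + k * (\<Sum>j\<in>{j. (j, i) \<in> E}. lam t j - lam t i))) (at t within {0..})))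
             \<longrightarrow> (\<forall>i<N. \<forall>t\<ge>T lam0 k.
                    \<bar>xhat (f i) (phi i) (xl i) (xu i) (lam t i)
                      - xhat (f i) (phi i) (xl i) (xu i) lamstar\<bar> \<le> eps)"
  proof (cases "N = 0")
    case True thus ?thesis by (intro exI[of _ 1]) auto
  next
    case False
    hence N: "N > 0" by simp
    obtain c where c: "c > 0" "\<forall>i<N. \<forall>x y. xl i \<le> x \<longrightarrow> x \<le> y \<longrightarrow> y \<le> xu i \<longrightarrow>
      (y - phi i y) - (x - phi i x) \<ge> c * (y - x)" using csep by blast
    define eta where "eta = c * eps"
    have eta: "eta > 0" unfolding eta_def using c eps by simp
    obtain B where B: "B \<ge> 0" "\<forall>i<N. \<forall>mu. \<bar>hh i mu\<bar> \<le> B" using h_bound by blast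
    obtain C where C: "C > 0" "\<forall>l. Dg N l \<le> C * Sg N E l" using coercive[OF A3_nodes A3_connected] by blast
    obtain lam1 ru where U: "ru > 0" "\<forall>mu. lamstar \<le> mu \<longrightarrow> mu \<le> lam1 + 2 * ru \<longrightarrow> HH mu \<ge> - eta"
      "(\<forall>mu\<ge>lamstar. HH mu \<ge> - eta) \<or> HH lam1 \<le> - (eta / 2)" using upper_choice[OF eta] by blast
    obtain mu1 rl where L: "rl > 0" "\<forall>mu. mu \<le> lamstar \<longrightarrow> mu1 - 2 * rl \<le> mu \<longrightarrow> HH mu \<le> eta"
      "(\<forall>mu\<le>lamstar. HH mu \<le> eta) \<or> HH mu1 \<ge> eta / 2" using lower_choice[OF eta] by blast
    define rho where "rho = min ru rl"
    have rho: "rho > 0" "rho \<le> ru" "rho \<le> rl" unfolding rho_def using U L by auto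
    define kbar where "kbar = 1 + C * (1 + 4 * N * B^2 * C) / (N * rho^2)"
    define T where "T = (\<lambda>(lam0 :: nat \<Rightarrow> real) (k :: real). Dg N lam0 +
       2 * (\<bar>\<Sum>i<N. lam0 i\<bar> + N * B * Dg N lam0 + N * \<bar>lam1 + rho\<bar> + N * \<bar>mu1 - rho\<bar>) / eta)"
    have kbar0: "kbar > 0" unfolding kbar_def using C B N rho by (simp add: add_pos_nonneg)
    show ?thesis
    proof (intro exI[of _ kbar] conjI kbar0 exI[of _ T] allI impI)
      fix k :: real and lam0 :: "nat \<Rightarrow> real" and lam :: "real \<Rightarrow> nat \<Rightarrow> real" and i :: nat and t :: real
      assume k: "kbar < k"
      assume H: "(\<forall>i<N. lam 0 i = lam0 i) \<and>
              (\<forall>i<N. \<forall>t\<ge>0. ((\<lambda>s. lam s i) has_real_derivative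
                  (d i - xhat (f i) (phi i) (xl i) (xu i) (lam t i)
                       + phi i (xhat (f i) (phi i) (xl i) (xu i) (lam t i))
                       + k * (\<Sum>j\<in>{j. (j, i) \<in> E}. lam t j - lam t i))) (at t within {0..}))"
      assume i: "i < N" and t: "T lam0 k \<le> t"
      have o: "ode k lam" unfolding ode_def
      proof (intro allI impI)
        fix i :: nat and t :: real assume i: "i < N" and t: "0 \<le> t"
        have "d i - xhat (f i) (phi i) (xl i) (xu i) (lam t i)
                       + phi i (xhat (f i) (phi i) (xl i) (xu i) (lam t i))
                       + k * (\<Sum>j\<in>{j. (j, i) \<in> E}. lam t j - lam t i)
            = hh i (lam t i) + k * ug N E (lam t) i"
          unfolding hh_def X_def ug_def using sum_nbr[OF A3_nodes, where i=i and F="\<lambda>j. lam t j - lam t i"] by simp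
        moreover have "((\<lambda>s. lam s i) has_real_derivative (d i - xhat (f i) (phi i) (xl i) (xu i) (lam t i)
                       + phi i (xhat (f i) (phi i) (xl i) (xu i) (lam t i))
                       + k * (\<Sum>j\<in>{j. (j, i) \<in> E}. lam t j - lam t i))) (at t within {0..})"
          using H i t by blast
        ultimately show "((\<lambda>s. lam s i) has_real_derivative hh i (lam t i) + k * ug N E (lam t) i) (at t within {0..})"
          by simp
      qed
      have "0 \<le> C * (1 + 4 * N * B^2 * C) / (N * rho^2)" using C B N rho
        by (intro divide_nonneg_nonneg mult_nonneg_nonneg) auto
      hence k1: "k \<ge> 1" using k unfolding kbar_def by linarith
      have k2: "k * N * rho^2 / C \<ge> 1 + 4 * N * B^2 * C"
      proof -
        have pos: "N * rho^2 > 0" using N rho by simp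
        have "C * (1 + 4 * N * B^2 * C) / (N * rho^2) < k - 1" using k unfolding kbar_def by simp
        hence "C * (1 + 4 * N * B^2 * C) < (k - 1) * (N * rho^2)" using pos by (simp add: divide_less_eq)
        also have "\<dots> \<le> k * (N * rho^2)" using pos by (intro mult_right_mono) auto
        finally have "C * (1 + 4 * N * B^2 * C) \<le> k * (N * rho^2)" by simp
        thus ?thesis using C by (simp add: le_divide_eq mult.commute mult.left_commute)
      qed
      define T0 where "T0 = Dg N lam0"
      have D0: "Dg N (lam 0) = T0" unfolding T0_def Dg_def using H by simp
      have T00: "T0 \<ge> 0" unfolding T0_def Dg_def by (intro sum_nonneg) auto
      have L0: "(\<Sum>i<N. lam 0 i) = (\<Sum>i<N. lam0 i)" using H by simp
      have sp: "\<forall>t\<ge>T0. \<forall>i<N. \<forall>j<N. \<bar>lam t i - lam t j\<bar> \<le> rho"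
      proof (intro allI impI)
        fix t i j assume "T0 \<le> t" "i < N" "j < N"
        hence "Dg N (lam t) \<le> rho^2" using D_phase[OF B(2,1) C N rho(1) k1 k2 o] D0 by simp
        thus "\<bar>lam t i - lam t j\<bar> \<le> rho" using spread rho \<open>i < N\<close> \<open>j < N\<close> by simp
      qed
      have Tnn: "0 \<le> 2 * (N * \<bar>mu1 - rho\<bar>) / eta" "0 \<le> 2 * (N * \<bar>lam1 + rho\<bar>) / eta" using eta by auto
      have tsplit: "T lam0 k = T0 + 2 * (\<bar>\<Sum>i<N. lam 0 i\<bar> + N * B * T0 + N * \<bar>lam1 + rho\<bar>) / eta + 2 * (N * \<bar>mu1 - rho\<bar>) / eta"
         "T lam0 k = T0 + 2 * (\<bar>\<Sum>i<N. lam 0 i\<bar> + N * B * T0 + N * \<bar>mu1 - rho\<bar>) / eta + 2 * (N * \<bar>lam1 + rho\<bar>) / eta"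
        unfolding T_def T0_def L0 by (simp_all add: add_divide_distrib)
      have tU: "t \<ge> T0 + 2 * (\<bar>\<Sum>i<N. lam 0 i\<bar> + N * B * T0 + N * \<bar>lam1 + rho\<bar>) / eta"
        using t tsplit(1) Tnn by linarith
      have tL: "t \<ge> T0 + 2 * (\<bar>\<Sum>i<N. lam 0 i\<bar> + N * B * T0 + N * \<bar>mu1 - rho\<bar>) / eta"
        using t tsplit(2) Tnn by linarith
      have "0 \<le> 2 * (\<bar>\<Sum>i<N. lam 0 i\<bar> + N * B * T0 + N * \<bar>lam1 + rho\<bar>) / eta"
        using eta B T00 by (intro divide_nonneg_pos) auto
      hence tT0: "t \<ge> T0" using tU by linarith
      have goal: "\<bar>X i (lam t i) - X i lamstar\<bar> \<le> eps"
      proof (cases "lam t i \<ge> lamstar")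
        case True
        have "HH (lam t i) \<ge> - eta"
        proof (cases "\<forall>mu\<ge>lamstar. HH mu \<ge> - eta")
          case True thus ?thesis using \<open>lam t i \<ge> lamstar\<close> by blast
        next
          case False
          hence H1: "HH lam1 \<le> - (eta / 2)" using U(3) by blast
          have "(\<Sum>i<N. lam t i) \<le> N * (lam1 + rho)" by (rule L_up[OF B(2,1) N o T00 sp eta H1 tU])
          moreover have "N * lam t i \<le> (\<Sum>j<N. lam t j) + N * rho" using avg_low(2)[OF _ i] sp tT0 by blast
          ultimately have "N * lam t i \<le> N * (lam1 + 2 * rho)" by (simp add: algebra_simps)
          hence "lam t i \<le> lam1 + 2 * rho" using N by simp
          hence "lam t i \<le> lam1 + 2 * ru" using rho by linarith
          thus ?thesis using U(2) \<open>lam t i \<ge> lamstar\<close> by blast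
        qed
        thus ?thesis using good_up[OF c True _ i] unfolding eta_def by simp
      next
        case False
        hence F: "lam t i \<le> lamstar" by simp
        have "HH (lam t i) \<le> eta"
        proof (cases "\<forall>mu\<le>lamstar. HH mu \<le> eta")
          case True thus ?thesis using F by blast
        next
          case False
          hence H1: "HH mu1 \<ge> eta / 2" using L(3) by blast
          have "(\<Sum>i<N. lam t i) \<ge> N * (mu1 - rho)" by (rule L_low[OF B(2,1) N o T00 sp eta H1 tL])
          moreover have "N * lam t i \<ge> (\<Sum>j<N. lam t j) - N * rho" using avg_low(1)[OF _ i] sp tT0 by blast
          ultimately have "N * lam t i \<ge> N * (mu1 - 2 * rho)" by (simp add: algebra_simps)
          hence "lam t i \<ge> mu1 - 2 * rho" using N by simp
          hence "mu1 - 2 * rl \<le> lam t i" using rho by linarith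
          thus ?thesis using L(2) F by blast
        qed
        thus ?thesis using good_low[OF c F _ i] unfolding eta_def by simp
      qed
      thus "\<bar>xhat (f i) (phi i) (xl i) (xu i) (lam t i) - xhat (f i) (phi i) (xl i) (xu i) lamstar\<bar> \<le> eps"
        unfolding X_def .
    qed
  qed
qed

end


theorem theorem3:
  fixes N :: nat
    and d xl xu :: "nat \<Rightarrow> real"
    and f phi :: "nat \<Rightarrow> real \<Rightarrow> real"
    and E :: "(nat \<times> nat) set"
    and lamstar :: real
  assumes intervals: "\<forall>i<N. xl i \<le> xu i"
    and A1_C1: "\<forall>i<N. f i C1_differentiable_on UNIV \<and> phi i C1_differentiable_on UNIV"
    and A1_fconv: "\<forall>i<N. strictly_convex_on {xl i..xu i} (f i)"
    and A1_phiconv: "\<forall>i<N. convex_on {xl i..xu i} (phi i)"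
    and A1_phider: "\<forall>i<N. \<forall>x\<in>{xl i..xu i}. deriv (phi i) x < 1"
    and A2: "\<forall>i<N. \<forall>x\<in>{xl i..xu i}. deriv (f i) x > 0"
    and A3_nodes: "E \<subseteq> {..<N} \<times> {..<N}"
    and A3_undirected: "sym E"
    and A3_connected: "\<forall>i<N. \<forall>j<N. (i, j) \<in> E\<^sup>*"
    and feasible: "(\<Sum>i<N. xl i - phi i (xl i)) \<le> (\<Sum>i<N. d i)"
                  "(\<Sum>i<N. d i) \<le> (\<Sum>i<N. xu i - phi i (xu i))"
    and maximizer: "\<forall>lam. gm N f phi d xl xu lam \<le> gm N f phi d xl xu lamstar"
  shows "\<forall>\<epsilon>>0. \<exists>kbar>0. \<exists>T :: (nat \<Rightarrow> real) \<Rightarrow> real \<Rightarrow> real.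
           \<forall>k>kbar. \<forall>lam0 :: nat \<Rightarrow> real. \<forall>lam :: real \<Rightarrow> nat \<Rightarrow> real.
             ((\<forall>i<N. lam 0 i = lam0 i) \<and>
              (\<forall>i<N. \<forall>t\<ge>0. ((\<lambda>s. lam s i) has_real_derivative
                  (d i - xhat (f i) (phi i) (xl i) (xu i) (lam t i)
                       + phi i (xhat (f i) (phi i) (xl i) (xu i) (lam t i))
                       + k * (\<Sum>j\<in>{j. (j, i) \<in> E}. lam t j - lam t i))) (at t within {0..})))
             \<longrightarrow> (\<forall>i<N. \<forall>t\<ge>T lam0 k.
                    \<bar>xhat (f i) (phi i) (xl i) (xu i) (lam t i)
                      - xhat (f i) (phi i) (xl i) (xu i) lamstar\<bar> \<le> \<epsilon>)"
proof -
  have "prob N d xl xu f phi E lamstar"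
    unfolding prob_def using intervals A1_C1 A1_fconv A1_phiconv A1_phider A2 A3_nodes A3_undirected
      A3_connected maximizer by blast
  thus ?thesis by (rule prob.main)
qed

end
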